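(* For every integer $n\ge 1$, the unitary group $\mathfrak U(n)$ of $n\times n$ complex unitary matrices, as a compact group with its normalized Haar measure, has a dense subgroup that is not Haar measurable. *)

theory Defs
  imports "HOL-Analysis.Analysis" "HOL-Algebra.Group"
begin

definition cadj :: "complex^'n^'n \<Rightarrow> complex^'n^'n" where
  "cadj A = (\<chi> i j. cnj (A $ j $ i))"

definition unitary_matrices :: "(complex^'n^'n) set" where
  "unitary_matrices = {A. A ** cadj A = mat 1 \<and> cadj A ** A = mat 1}"

definition unitary_group :: "(complex^'n^'n) monoid" where
  "unitary_group = \<lparr>carrier = unitary_matrices, mult = (**), one = mat 1\<rparr>"

definition haar_measure_U :: "(complex^'n^'n) measure \<Rightarrow> bool" where
  "haar_measure_U \<mu> \<longleftrightarrow>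
     sets \<mu> = sets (restrict_space borel unitary_matrices) \<and>
     space \<mu> = unitary_matrices \<and>
     emeasure \<mu> (space \<mu>) = 1 \<and>
     (\<forall>g\<in>unitary_matrices. \<forall>A\<in>sets \<mu>.
        emeasure \<mu> ((\<lambda>x. g ** x) ` A) = emeasure \<mu> A)"

end

theory Submission
  imports Defs
begin


interpretation Q: vector_space "\<lambda>q::rat. \<lambda>x::real. of_rat q * x"
  by unfold_locales (auto simp: algebra_simps of_rat_add of_rat_mult)

lemma exists_irrat: "\<exists>x::real. x \<notin> \<rat>"
proof (rule ccontr)
  assume "\<not> ?thesis"
  then have "(UNIV::real set) \<subseteq> \<rat>" by auto
  then have "countable (UNIV::real set)" using countable_rat countable_subset by blast
  then show False using uncountable_UNIV_real by blast
qed

lemma hamel: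
  obtains V :: "real set" and b :: real where
    "\<And>q. of_rat q \<in> V"
    "\<And>x y. x \<in> V \<Longrightarrow> y \<in> V \<Longrightarrow> x + y \<in> V"
    "\<And>x. x \<in> V \<Longrightarrow> - x \<in> V"
    "\<And>x. \<exists>v\<in>V. \<exists>q. x = v + of_rat q * b"
    "\<And>q. of_rat q * b \<in> V \<Longrightarrow> q = 0"
proof -
  have ind1: "Q.independent {1::real}"
    by (simp add: Q.independent_insert Q.span_empty)
  obtain B where B: "{1} \<subseteq> B" "Q.independent B" "UNIV \<subseteq> Q.span B"
    by (rule Q.maximal_independent_subset_extend[OF subset_UNIV ind1])
  obtain z :: real where z: "z \<notin> \<rat>" using exists_irrat by blast
  have "\<exists>b\<in>B. b \<noteq> 1"
  proof (rule ccontr)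
    assume "\<not> ?thesis"
    then have "B \<subseteq> {1}" by auto
    then have "z \<in> Q.span {1}" using B(3) Q.span_mono by blast
    then obtain q where "z = of_rat q * 1"
      by (auto simp: Q.span_singleton)
    then show False using z Rats_of_rat by simp
  qed
  then obtain b where b: "b \<in> B" "b \<noteq> 1" by blast
  define V where "V = Q.span (B - {b})"
  have one: "1 \<in> B - {b}" using B b by auto
  show ?thesis
  proof
    fix q show "of_rat q \<in> V"
      unfolding V_def using Q.span_scale[OF Q.span_base[OF one], of q] by simp
  next
    fix x y assume "x \<in> V" "y \<in> V" then show "x + y \<in> V"
      unfolding V_def by (rule Q.span_add)
  next
    fix x assume "x \<in> V" then show "- x \<in> V"
      unfolding V_def by (rule Q.span_neg)
  next
    fix x :: real
    have "x \<in> Q.span (insert b (B - {b}))" using B b by (metis insert_Diff subset_iff UNIV_I)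
    then obtain k where "x - of_rat k * b \<in> V"
      unfolding V_def Q.span_insert by auto
    then show "\<exists>v\<in>V. \<exists>q. x = v + of_rat q * b"
      by (metis diff_add_cancel)
  next
    fix q assume h: "of_rat q * b \<in> V"
    show "q = 0"
    proof (rule ccontr)
      assume "q \<noteq> 0"
      then have "of_rat (inverse q) * (of_rat q * b) = b"
      proof -
        have "of_rat (inverse q) * of_rat q = (1::real)"
          using \<open>q \<noteq> 0\<close> by (metis of_rat_1 of_rat_mult left_inverse)
        then show ?thesis by (simp add: mult.assoc[symmetric])
      qed
      moreover have "of_rat (inverse q) * (of_rat q * b) \<in> V"
        using h unfolding V_def by (rule Q.span_scale)
      ultimately have "b \<in> Q.span (B - {b})" unfolding V_def by metis
      then have "Q.dependent B" using b(1) unfolding Q.dependent_def by blast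
      then show False using B(2) by simp
    qed
  qed
qed



lemma cadj_cadj[simp]: "cadj (cadj A) = A"
  by (simp add: cadj_def vec_eq_iff)

lemma cadj_mult: "cadj (A ** B) = cadj B ** cadj A"
  by (simp add: cadj_def vec_eq_iff matrix_matrix_mult_def cnj_sum mult.commute)

lemma mat_mult_left: "(mat c :: 'a::comm_ring_1^'n^'n) ** A = (\<chi> i j. c * A$i$j)"
  by (simp add: vec_eq_iff matrix_matrix_mult_def mat_def if_distrib if_distribR cong: if_cong)

lemma mat_mult_mat: "(mat c::'a::comm_ring_1^'n^'n) ** mat d = mat (c*d)"
  unfolding mat_mult_left by (simp add: vec_eq_iff mat_def)

lemma cadj_mat: "cadj (mat c) = mat (cnj c)"
  by (simp add: cadj_def vec_eq_iff mat_def)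

lemma det_cnj: "det (\<chi> i j. cnj (A$i$j)) = cnj (det (A::complex^'n^'n))"
  by (simp add: det_def cnj_sum cnj_prod)

lemma det_cadj: "det (cadj A) = cnj (det A)"
proof -
  have "cadj A = transpose (\<chi> i j. cnj (A$i$j))"
    by (simp add: cadj_def transpose_def vec_eq_iff)
  then show ?thesis by (simp add: det_cnj)
qed

lemma unitary_mult:
  assumes "A \<in> unitary_matrices" "B \<in> unitary_matrices"
  shows "A ** B \<in> unitary_matrices"
proof -
  have "(A ** B) ** cadj (A ** B) = A ** (B ** cadj B) ** cadj A"
    by (simp add: cadj_mult matrix_mul_assoc)
  also have "\<dots> = mat 1" using assms by (simp add: unitary_matrices_def)
  finally have 1: "(A ** B) ** cadj (A ** B) = mat 1" .
  have "cadj (A ** B) ** (A ** B) = cadj B ** (cadj A ** A) ** B"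
    by (simp add: cadj_mult matrix_mul_assoc)
  also have "\<dots> = mat 1" using assms by (simp add: unitary_matrices_def)
  finally show ?thesis using 1 by (simp add: unitary_matrices_def)
qed

lemma unitary_cadj: "A \<in> unitary_matrices \<Longrightarrow> cadj A \<in> unitary_matrices"
  by (simp add: unitary_matrices_def)

lemma unitary_mat: "cmod c = 1 \<Longrightarrow> mat c \<in> unitary_matrices"
proof -
  assume "cmod c = 1"
  then have "c * cnj c = 1" "cnj c * c = 1"
    by (metis complex_norm_square mult.commute of_real_1 power_one)+
  then show ?thesis
    by (simp add: unitary_matrices_def cadj_mat mat_mult_mat)
qed

lemma det_mat: "det (mat c :: 'a::comm_ring_1^'n^'n) = c ^ CARD('n)"
  by (simp add: det_diagonal mat_def)

lemma unitary_det: "A \<in> unitary_matrices \<Longrightarrow> cmod (det A) = 1"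
proof -
  assume A: "A \<in> unitary_matrices"
  then have "det (A ** cadj A) = det (mat 1 :: complex^'n^'n)" by (simp add: unitary_matrices_def)
  then have "det A * cnj (det A) = 1" by (simp add: det_mul det_cadj)
  then have "complex_of_real (cmod (det A) ^ 2) = 1" by (simp only: complex_norm_square)
  then have "cmod (det A) ^ 2 = 1" using of_real_eq_1_iff by blast
  then show ?thesis using norm_ge_zero[of "det A"] by (simp add: power2_eq_1_iff)
qed

lemma unitary_inv:
  assumes "A \<in> unitary_matrices"
  shows "inv\<^bsub>unitary_group\<^esub> A = cadj A"
  unfolding m_inv_def unitary_group_def
proof (simp, rule the_equality)
  show "cadj A \<in> unitary_matrices \<and> A ** cadj A = mat 1 \<and> cadj A ** A = mat 1"
    using assms by (simp add: unitary_matrices_def)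
next
  fix y assume "y \<in> unitary_matrices \<and> A ** y = mat 1 \<and> y ** A = mat 1"
  then have "cadj A ** (A ** y) = cadj A" by simp
  moreover have "cadj A ** (A ** y) = (cadj A ** A) ** y" by (simp add: matrix_mul_assoc)
  ultimately show "y = cadj A" using assms
    by (simp add: unitary_matrices_def)
qed


lemma suminf_const_le1: assumes "(\<Sum>k::nat. (c::ennreal)) \<le> 1" shows "c = 0"
proof (rule ccontr)
  assume c: "c \<noteq> 0"
  have "\<not> summable (\<lambda>_::nat. 1::real)"
    using summable_LIMSEQ_zero LIMSEQ_const_iff zero_neq_one by metis
  then have "(\<Sum>i::nat. ennreal 1) = (Orderings.top::ennreal)"
    using summable_suminf_not_top[of "\<lambda>_. 1"] by auto
  then have "(\<Sum>i::nat. (1::ennreal)) = (Orderings.top::ennreal)" by simp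
  moreover have "(\<Sum>k::nat. c) = c * (\<Sum>k::nat. 1)"
    using ennreal_suminf_cmult[of c "\<lambda>_. 1"] by simp
  ultimately have "(\<Sum>k::nat. c) = (Orderings.top::ennreal)" using c by (simp add: ennreal_mult_top)
  then show False using assms by (simp add: top_unique)
qed


definition ee :: "real \<Rightarrow> complex" where "ee t = cis (2 * pi * t)"

lemma ee_add: "ee x * ee y = ee (x + y)"
  by (simp add: ee_def cis_mult distrib_left)

lemma ee_0[simp]: "ee 0 = 1" by (simp add: ee_def)

lemma ee_norm[simp]: "cmod (ee x) = 1" by (simp add: ee_def)

lemma ee_pow: "ee x ^ n = ee (real n * x)"
  by (simp add: ee_def Complex.DeMoivre mult.left_commute)

lemma ee_eq: assumes "ee x = ee y" shows "x - y \<in> \<int>"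
proof -
  have "ee (x - y) = 1"
    using ee_add[of x "-y"] ee_add[of y "-y"] assms by simp
  then have "exp (\<i> * complex_of_real (2 * pi * (x - y))) = 1"
    by (simp add: ee_def cis_conv_exp)
  then obtain n :: int where "2 * pi * (x - y) = of_int (2 * n) * pi"
    unfolding exp_eq_1 by auto
  then have "x - y = of_int n" by simp
  then show ?thesis by simp
qed

lemma ee_exists: "cmod z = 1 \<Longrightarrow> \<exists>t. z = ee t"
proof -
  assume z: "cmod z = 1"
  then have "z \<noteq> 0" by auto
  then have "cis (Arg z) = z" using z by (simp add: cis_Arg sgn_div_norm)
  then show ?thesis unfolding ee_def by (rule_tac x="Arg z / (2 * pi)" in exI) simp
qed


lemma cont_mult_left: "continuous_on UNIV (\<lambda>x::complex^'n^'n. A ** x)"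
  unfolding matrix_matrix_mult_def by (intro continuous_intros)

lemma transl_eq:
  fixes g :: "complex^'n^'n"
  assumes g: "g \<in> unitary_matrices"
  shows "(\<lambda>x. g ** x) ` (unitary_matrices \<inter> Y) = unitary_matrices \<inter> (\<lambda>x. cadj g ** x) -` Y"
proof
  show "(\<lambda>x. g ** x) ` (unitary_matrices \<inter> Y) \<subseteq> unitary_matrices \<inter> (\<lambda>x. cadj g ** x) -` Y"
  proof
    fix x assume "x \<in> (\<lambda>x. g ** x) ` (unitary_matrices \<inter> Y)"
    then obtain y where y: "y \<in> unitary_matrices" "y \<in> Y" "x = g ** y" by auto
    have "cadj g ** (g ** y) = (cadj g ** g) ** y" by (simp add: matrix_mul_assoc)
    then have "cadj g ** x = y" using g y by (simp add: unitary_matrices_def)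
    then show "x \<in> unitary_matrices \<inter> (\<lambda>x. cadj g ** x) -` Y" using y g unitary_mult by auto
  qed
next
  show "unitary_matrices \<inter> (\<lambda>x. cadj g ** x) -` Y \<subseteq> (\<lambda>x. g ** x) ` (unitary_matrices \<inter> Y)"
  proof
    fix x assume x: "x \<in> unitary_matrices \<inter> (\<lambda>x. cadj g ** x) -` Y"
    have "g ** (cadj g ** x) = (g ** cadj g) ** x" by (simp add: matrix_mul_assoc)
    then have "g ** (cadj g ** x) = x" using g by (simp add: unitary_matrices_def)
    moreover have "cadj g ** x \<in> unitary_matrices \<inter> Y"
      using x g unitary_mult unitary_cadj by auto
    ultimately show "x \<in> (\<lambda>x. g ** x) ` (unitary_matrices \<inter> Y)" by (metis image_eqI)
  qed
qed

lemma transl_sets: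
  fixes g :: "complex^'n^'n"
  assumes mu: "haar_measure_U \<mu>" and g: "g \<in> unitary_matrices" and X: "X \<in> sets \<mu>"
  shows "(\<lambda>x. g ** x) ` X \<in> sets \<mu>"
proof -
  have sm: "sets \<mu> = sets (restrict_space borel unitary_matrices)" using mu by (simp add: haar_measure_U_def)
  obtain Y where Y: "Y \<in> sets borel" "X = unitary_matrices \<inter> Y"
    using X unfolding sm sets_restrict_space by auto
  have "(\<lambda>x::complex^'n^'n. cadj g ** x) \<in> borel_measurable borel"
    using borel_measurable_continuous_onI[OF cont_mult_left[of "cadj g"]] by simp
  from measurable_sets[OF this Y(1)]
  have "(\<lambda>x::complex^'n^'n. cadj g ** x) -` Y \<in> sets borel" by simp
  then have "unitary_matrices \<inter> (\<lambda>x. cadj g ** x) -` Y \<in> sets (restrict_space borel unitary_matrices)"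
    unfolding sets_restrict_space by auto
  then show ?thesis unfolding sm Y(2) transl_eq[OF g] .
qed

context
  fixes V :: "real set" and b :: real
  assumes V_rat: "\<And>q. of_rat q \<in> V"
    and V_add: "\<And>x y. x \<in> V \<Longrightarrow> y \<in> V \<Longrightarrow> x + y \<in> V"
    and V_neg: "\<And>x. x \<in> V \<Longrightarrow> - x \<in> V"
    and V_span: "\<And>x. \<exists>v\<in>V. \<exists>q. x = v + of_rat q * b"
    and V_indep: "\<And>q. of_rat q * b \<in> V \<Longrightarrow> q = 0"
begin

definition Hs :: "(complex^'n^'n) set" where
  "Hs = {U \<in> unitary_matrices. \<exists>v\<in>V. det U = ee v}"

lemma V_Rats: "x \<in> \<rat> \<Longrightarrow> x \<in> V"
  using V_rat by (auto simp: Rats_def)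

lemma V_int: "x \<in> \<int> \<Longrightarrow> x \<in> V"
  using V_Rats Ints_subset_Rats by blast

lemma V_diff: "x \<in> V \<Longrightarrow> y \<in> V \<Longrightarrow> x - y \<in> V"
  using V_add V_neg by (metis diff_conv_add_uminus)

lemma Hs_subgroup: "subgroup (Hs :: (complex^'n^'n) set) unitary_group"
proof (rule subgroup.intro)
  show "Hs \<subseteq> carrier unitary_group" by (auto simp: Hs_def unitary_group_def)
next
  fix x y :: "complex^'n^'n" assume "x \<in> Hs" "y \<in> Hs"
  then obtain v w where "x \<in> unitary_matrices" "y \<in> unitary_matrices" "v \<in> V" "w \<in> V"
    "det x = ee v" "det y = ee w" by (auto simp: Hs_def)
  then show "x \<otimes>\<^bsub>unitary_group\<^esub> y \<in> Hs"
    by (auto simp: Hs_def unitary_group_def unitary_mult det_mul ee_add intro!: bexI[of _ "v+w"] V_add)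
next
  show "\<one>\<^bsub>unitary_group\<^esub> \<in> (Hs :: (complex^'n^'n) set)"
    using V_rat[of 0] by (auto simp: Hs_def unitary_group_def unitary_matrices_def cadj_mat
        intro!: bexI[of _ 0])
next
  fix x :: "complex^'n^'n" assume "x \<in> Hs"
  then obtain v where x: "x \<in> unitary_matrices" "v \<in> V" "det x = ee v" by (auto simp: Hs_def)
  have "cnj (ee v) = ee (- v)" by (simp add: ee_def cis_cnj)
  then show "inv\<^bsub>unitary_group\<^esub> x \<in> Hs"
    using x by (auto simp: Hs_def unitary_inv unitary_cadj det_cadj intro!: bexI[of _ "-v"] V_neg)
qed

lemma Hs_dense:
  assumes U: "U \<in> (unitary_matrices :: (complex^'n^'n) set)"
  shows "U \<in> closure Hs"
proof -
  obtain \<theta> where th: "det U = ee \<theta>" using ee_exists unitary_det[OF U] by blast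
  define n where "n = real CARD('n)"
  have n: "n > 0" unfolding n_def by simp
  have "\<forall>k::nat. \<exists>r\<in>\<rat>. \<theta> - 1 / real (Suc k) < r \<and> r < \<theta>"
    by (intro allI Rats_dense_in_real) simp
  then obtain r where r: "\<And>k. r k \<in> \<rat>" "\<And>k. \<theta> - 1 / real (Suc k) < r k" "\<And>k. r k < \<theta>"
    by metis
  have rlim: "r \<longlonglongrightarrow> \<theta>"
  proof (rule tendsto_sandwich[of "\<lambda>k. \<theta> - 1 / real (Suc k)" _ _ "\<lambda>_. \<theta>"])
    show "\<forall>\<^sub>F k in sequentially. \<theta> - 1 / real (Suc k) \<le> r k" using r(2) by (simp add: less_imp_le)
    show "\<forall>\<^sub>F k in sequentially. r k \<le> \<theta>" using r(3) by (simp add: less_imp_le)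
    show "(\<lambda>k. \<theta> - 1 / real (Suc k)) \<longlonglongrightarrow> \<theta>"
      using tendsto_diff[OF tendsto_const LIMSEQ_inverse_real_of_nat] by (simp add: inverse_eq_divide)
  qed simp
  define s where "s k = (r k - \<theta>) / n" for k
  have slim: "s \<longlonglongrightarrow> 0"
    unfolding s_def using tendsto_divide[OF tendsto_diff[OF rlim tendsto_const[of \<theta>]] tendsto_const[of n]] n
    by simp
  have clim: "(\<lambda>k. ee (s k)) \<longlonglongrightarrow> 1"
  proof -
    have "(\<lambda>k. exp (\<i> * complex_of_real (2 * pi * s k))) \<longlonglongrightarrow> exp (\<i> * complex_of_real (2 * pi * 0))"
      by (intro tendsto_intros slim)
    then show ?thesis by (simp add: ee_def cis_conv_exp)
  qed
  define f where "f k = mat (ee (s k)) ** U" for k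
  have "\<forall>k. f k \<in> Hs"
  proof
    fix k
    have "f k \<in> unitary_matrices" unfolding f_def by (intro unitary_mult unitary_mat U) simp
    moreover have "det (f k) = ee (r k)"
    proof -
      have "det (f k) = ee (n * s k) * ee \<theta>"
        unfolding f_def by (simp add: det_mul det_mat ee_pow th n_def)
      also have "n * s k = r k - \<theta>" unfolding s_def using n by simp
      finally show ?thesis by (simp add: ee_add)
    qed
    ultimately show "f k \<in> Hs" unfolding Hs_def using V_Rats r(1) by blast
  qed
  moreover have "f \<longlonglongrightarrow> U"
  proof -
    have "f = (\<lambda>k. \<chi> i j. ee (s k) * U$i$j)" unfolding f_def by (simp add: mat_mult_left)
    moreover have "(\<lambda>k. \<chi> i j. ee (s k) * U$i$j) \<longlonglongrightarrow> (\<chi> i j. 1 * U$i$j)"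
      by (intro tendsto_vec_lambda tendsto_mult clim tendsto_const)
    ultimately show ?thesis by simp
  qed
  ultimately show ?thesis unfolding closure_sequential by blast
qed

definition gq :: "rat \<Rightarrow> complex^'n^'n" where
  "gq q = mat (ee (of_rat q * b / real CARD('n)))"

lemma gq_unitary: "gq q \<in> unitary_matrices"
  unfolding gq_def by (rule unitary_mat) simp

lemma det_gq: "det (gq q :: complex^'n^'n) = ee (of_rat q * b)"
  unfolding gq_def by (simp add: det_mat ee_pow)

lemma gq_inv: "(gq q :: complex^'n^'n) ** gq (- q) = mat 1"
  unfolding gq_def by (simp add: mat_mult_mat ee_add of_rat_minus add_divide_distrib[symmetric])

lemma Hs_cover:
  "(unitary_matrices :: (complex^'n^'n) set) \<subseteq> (\<Union>k. (\<lambda>x. gq (from_nat k) ** x) ` Hs)"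
proof
  fix U :: "complex^'n^'n" assume U: "U \<in> unitary_matrices"
  obtain \<theta> where th: "det U = ee \<theta>" using ee_exists unitary_det[OF U] by blast
  obtain v q where vq: "v \<in> V" "\<theta> = v + of_rat q * b" using V_span by blast
  define W where "W = gq (- q) ** U"
  have "W \<in> unitary_matrices" unfolding W_def using gq_unitary U by (rule unitary_mult)
  moreover have "det W = ee v"
    unfolding W_def by (simp add: det_mul det_gq th vq ee_add of_rat_minus)
  ultimately have "W \<in> Hs" using vq unfolding Hs_def by blast
  moreover have "gq q ** W = U"
    unfolding W_def by (simp add: matrix_mul_assoc gq_inv)
  ultimately have "U \<in> (\<lambda>x. gq (from_nat (to_nat q)) ** x) ` Hs" by auto
  then show "U \<in> (\<Union>k. (\<lambda>x. gq (from_nat k) ** x) ` Hs)" by blast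
qed

lemma Hs_disjoint:
  assumes "k \<noteq> k'"
  shows "(\<lambda>x. gq (of_nat k) ** x) ` Hs \<inter> (\<lambda>x. gq (of_nat k') ** x) ` (Hs :: (complex^'n^'n) set) = {}"
proof (rule ccontr)
  assume "\<not> ?thesis"
  then obtain x y :: "complex^'n^'n" where xy: "x \<in> Hs" "y \<in> Hs" "gq (of_nat k) ** x = gq (of_nat k') ** y"
    by blast
  obtain v w where vw: "v \<in> V" "w \<in> V" "det x = ee v" "det y = ee w" using xy by (auto simp: Hs_def)
  have "ee (real k * b + v) = ee (real k' * b + w)"
    using arg_cong[OF xy(3), of det] by (simp add: det_mul det_gq vw ee_add)
  then have "(real k * b + v) - (real k' * b + w) \<in> \<int>" by (rule ee_eq)
  then have "(real k * b + v) - (real k' * b + w) \<in> V" by (rule V_int)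
  then have "((real k * b + v) - (real k' * b + w)) - (v - w) \<in> V" using vw V_diff by blast
  moreover have "((real k * b + v) - (real k' * b + w)) - (v - w) = of_rat (of_nat k - of_nat k') * b"
    by (simp add: of_rat_diff algebra_simps)
  ultimately have "of_rat (of_nat k - of_nat k') * b \<in> V" by simp
  then have "(of_nat k - of_nat k' :: rat) = 0" by (rule V_indep)
  then show False using assms by simp
qed

lemma Hs_nonmeas:
  assumes mu: "haar_measure_U (\<mu> :: (complex^'n^'n) measure)"
  shows "Hs \<notin> sets (completion \<mu>)"
proof
  assume "Hs \<in> sets (completion \<mu>)"
  then obtain S N N' where SN: "Hs = S \<union> N" "N \<subseteq> N'" "N' \<in> null_sets \<mu>" "S \<in> sets \<mu>"
    by (rule sets_completionE)
  have sp: "space \<mu> = unitary_matrices" and one: "emeasure \<mu> (space \<mu>) = 1"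
    and inv: "\<And>g A. g \<in> unitary_matrices \<Longrightarrow> A \<in> sets \<mu> \<Longrightarrow> emeasure \<mu> ((\<lambda>x. g ** x) ` A) = emeasure \<mu> A"
    using mu by (auto simp: haar_measure_U_def)
  define A2 where "A2 = S \<union> N'"
  have A2: "A2 \<in> sets \<mu>" using SN by (auto simp: A2_def)
  have mA2: "emeasure \<mu> A2 = emeasure \<mu> S" unfolding A2_def using SN by (simp add: emeasure_Un_null_set)
  have HA2: "Hs \<subseteq> A2" using SN unfolding A2_def by auto
  define D where "D k = (\<lambda>x. gq (of_nat k) ** x) ` S" for k :: nat
  have Dsets: "range D \<subseteq> sets \<mu>" unfolding D_def using transl_sets[OF mu gq_unitary SN(4)] by auto
  have "disjoint_family D"
    unfolding disjoint_family_on_def D_def using Hs_disjoint SN(1) by blast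
  then have "(\<Sum>k. emeasure \<mu> (D k)) = emeasure \<mu> (\<Union>k. D k)" using Dsets suminf_emeasure by blast
  also have "\<dots> \<le> emeasure \<mu> (space \<mu>)"
    using Dsets by (intro emeasure_mono) (auto dest: sets.sets_into_space)
  finally have "(\<Sum>k::nat. emeasure \<mu> S) \<le> 1"
    using one inv[OF gq_unitary SN(4)] by (simp add: D_def)
  then have S0: "emeasure \<mu> S = 0" by (rule suminf_const_le1)
  define E where "E k = (\<lambda>x. gq (from_nat k) ** x) ` A2" for k :: nat
  have Esets: "range E \<subseteq> sets \<mu>" unfolding E_def using transl_sets[OF mu gq_unitary A2] by auto
  have "space \<mu> \<subseteq> (\<Union>k. E k)"
    unfolding sp E_def using Hs_cover HA2 by blast
  then have "emeasure \<mu> (space \<mu>) \<le> emeasure \<mu> (\<Union>k. E k)"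
    using Esets by (intro emeasure_mono) auto
  also have "\<dots> \<le> (\<Sum>k. emeasure \<mu> (E k))" using Esets by (rule emeasure_subadditive_countably)
  also have "\<dots> = 0"
    using inv[OF gq_unitary A2] mA2 S0 by (simp add: E_def)
  finally show False using one by simp
qed

end


theorem mainTheorem2:
  shows "\<exists>H :: (complex^'n^'n) set.
           subgroup H unitary_group \<and>
           unitary_matrices \<subseteq> closure H \<and>
           (\<forall>\<mu>. haar_measure_U \<mu> \<longrightarrow> H \<notin> sets (completion \<mu>))"
proof -
  obtain V :: "real set" and b :: real where h:
    "\<And>q. of_rat q \<in> V"
    "\<And>x y. x \<in> V \<Longrightarrow> y \<in> V \<Longrightarrow> x + y \<in> V"
    "\<And>x. x \<in> V \<Longrightarrow> - x \<in> V"
    "\<And>x. \<exists>v\<in>V. \<exists>q. x = v + of_rat q * b"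
    "\<And>q. of_rat q * b \<in> V \<Longrightarrow> q = 0"
    using hamel by metis
  show ?thesis
    using Hs_subgroup[of V b, OF h] Hs_dense[of V b, OF h] Hs_nonmeas[of V b, OF h]
    by blast
qed

end
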